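(* Define $i:({}^{\star}\mathbb{R}_{\mathcal F})_F\to\mathbb{R}_{\mathcal F}^{\circ}$ by $i([x]_{\mathcal F})=[x]_o$ and $j:{}^{\star}\mathbb{R}_{\mathcal F}\to{}^{\star}\mathbb{R}$ by $j([x]_{\mathcal F})=[x]_{\mathcal U}$. Then $i$ and $j$ are well-defined, surjective ring homomorphisms (hence non-trivial), and order-preserving in the sense that $[x]_{\mathcal F}\le_{\mathcal F}[y]_{\mathcal F}$ implies $i([x]_{\mathcal F})\le_o i([y]_{\mathcal F})$ (when both sides are defined) and $j([x]_{\mathcal F})\le_{\mathcal U} j([y]_{\mathcal F})$.
   Context: $\mathcal F$ is the Fréchet filter of cofinite subsets of $\mathbb{N}$, $\mathcal U\supseteq\mathcal F$ is a nonprincipal ultrafilter on $\mathbb{N}$. Henle's ring ${}^{\star}\mathbb{R}_{\mathcal F}=\mathbb{R}^{\mathbb{N}}/\mathcal F$: classes $[x]_{\mathcal F}$ of real sequences identified when equal on a set in $\mathcal F$, pointwise operations, $[x]_{\mathcal F}\le_{\mathcal F}[y]_{\mathcal F}$ iff $\{n:x_n\le y_n\}\in\mathcal F$. The hyperreal field ${}^{\star}\mathbb{R}=\mathbb{R}^{\mathbb{N}}/\mathcal U$ analogously with $\mathcal U$ in place of $\mathcal F$. $({}^{\star}\mathbb{R}_{\mathcal F})_F$ denotes the subring of finite elements of ${}^{\star}\mathbb{R}_{\mathcal F}$, i.e. those $r$ with $-n\le r\le n$ for some $n\in\mathbb{N}$ (equivalently classes of eventually bounded sequences). With $\mathbb{R}^{\mathbb{N}}_B$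 the ring of bounded real sequences and $o=\{f:\lim_{n\to\infty}nf(n)=0\}$, $\mathbb{R}_{\mathcal F}^{\circ}=\mathbb{R}^{\mathbb{N}}_B/o$ with pointwise operations and order $[x]_o\le_o[y]_o$ iff there exist $z\in o$ and $\bar n$ with $x_n\le y_n+z_n$ for all $n\ge\bar n$. *)

theory Defs
  imports "HOL-Analysis.Analysis" "HOL-Algebra.QuotRing"
begin

definition is_ultrafilter :: "nat filter \<Rightarrow> bool" where
  "is_ultrafilter U \<longleftrightarrow> U \<noteq> bot \<and> (\<forall>P. eventually P U \<or> eventually (\<lambda>n. \<not> P n) U)"

text \<open>U contains the Frechet filter of cofinite sets: U \<le> cofinite (finer filter).
  Nonprincipality follows from this.\<close>

definition seq_ring :: "(nat \<Rightarrow> real) ring" where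
  "seq_ring = \<lparr>carrier = UNIV, monoid.mult = (\<lambda>x y n. x n * y n), one = (\<lambda>n. 1),
               zero = (\<lambda>n. 0), add = (\<lambda>x y n. x n + y n)\<rparr>"

definition bseq_ring :: "(nat \<Rightarrow> real) ring" where
  "bseq_ring = seq_ring\<lparr>carrier := {x. Bseq x}\<rparr>"

definition null_ideal :: "nat filter \<Rightarrow> (nat \<Rightarrow> real) set" where
  "null_ideal G = {x. eventually (\<lambda>n. x n = 0) G}"

definition o_ideal :: "(nat \<Rightarrow> real) set" where
  "o_ideal = {f. Bseq f \<and> (\<lambda>n. real n * f n) \<longlonglongrightarrow> 0}"

definition RF :: "(nat \<Rightarrow> real) set ring" where
  "RF = seq_ring Quot null_ideal cofinite"

definition RU :: "nat filter \<Rightarrow> (nat \<Rightarrow> real) set ring" where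
  "RU U = seq_ring Quot null_ideal U"

definition Ro :: "(nat \<Rightarrow> real) set ring" where
  "Ro = bseq_ring Quot o_ideal"

definition leF :: "(nat \<Rightarrow> real) set \<Rightarrow> (nat \<Rightarrow> real) set \<Rightarrow> bool" where
  "leF r s \<longleftrightarrow> (\<exists>x\<in>r. \<exists>y\<in>s. eventually (\<lambda>n. x n \<le> y n) cofinite)"

definition leU :: "nat filter \<Rightarrow> (nat \<Rightarrow> real) set \<Rightarrow> (nat \<Rightarrow> real) set \<Rightarrow> bool" where
  "leU U r s \<longleftrightarrow> (\<exists>x\<in>r. \<exists>y\<in>s. eventually (\<lambda>n. x n \<le> y n) U)"

definition le_o :: "(nat \<Rightarrow> real) set \<Rightarrow> (nat \<Rightarrow> real) set \<Rightarrow> bool" where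
  "le_o r s \<longleftrightarrow> (\<exists>x\<in>r. \<exists>y\<in>s. \<exists>z\<in>o_ideal. \<exists>N. \<forall>n\<ge>N. x n \<le> y n + z n)"

definition RF_fin :: "(nat \<Rightarrow> real) set ring" where
  "RF_fin = RF\<lparr>carrier := {r \<in> carrier RF. \<exists>m::nat.
      leF (null_ideal cofinite +>\<^bsub>seq_ring\<^esub> (\<lambda>n. - real m)) r \<and>
      leF r (null_ideal cofinite +>\<^bsub>seq_ring\<^esub> (\<lambda>n. real m))}\<rparr>"

definition map_i :: "(nat \<Rightarrow> real) set \<Rightarrow> (nat \<Rightarrow> real) set" where
  "map_i r = (\<Union>x\<in>r. o_ideal +>\<^bsub>bseq_ring\<^esub> x)"

definition map_j :: "nat filter \<Rightarrow> (nat \<Rightarrow> real) set \<Rightarrow> (nat \<Rightarrow> real) set" where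
  "map_j U r = (\<Union>x\<in>r. null_ideal U +>\<^bsub>seq_ring\<^esub> x)"

end

theory Submission
  imports Defs
begin

lemma coset_seq: "a_r_coset seq_ring H x = {y. (\<lambda>n. y n - x n) \<in> H}"
proof -
  have "a_r_coset seq_ring H x = (\<Union>h\<in>H. {(\<lambda>n. h n + x n)})"
    by (simp add: a_r_coset_def r_coset_def seq_ring_def)
  also have "\<dots> = {y. (\<lambda>n. y n - x n) \<in> H}"
  proof safe
    fix h assume "h \<in> H" then show "(\<lambda>n. h n + x n - x n) \<in> H" by simp
  next
    fix y assume "(\<lambda>n. y n - x n) \<in> H"
    moreover have "y = (\<lambda>n. (\<lambda>n. y n - x n) n + x n)" by simp
    ultimately show "y \<in> (\<Union>h\<in>H. {(\<lambda>n. h n + x n)})" by blast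
  qed
  finally show ?thesis .
qed

lemma coset_bseq: "a_r_coset bseq_ring H x = a_r_coset seq_ring H x"
  by (simp add: a_r_coset_def r_coset_def seq_ring_def bseq_ring_def)

lemma set_add_bseq: "set_add bseq_ring A B = set_add seq_ring A B"
  by (simp add: set_add_def set_mult_def seq_ring_def bseq_ring_def)

lemma set_add_seq: "set_add seq_ring A B = (\<Union>a\<in>A. \<Union>b\<in>B. {(\<lambda>n. a n + b n)})"
  by (simp add: set_add_def set_mult_def seq_ring_def)

lemma mult_bseq: "x \<otimes>\<^bsub>bseq_ring\<^esub> y = x \<otimes>\<^bsub>seq_ring\<^esub> y"
  by (simp add: seq_ring_def bseq_ring_def)

lemma rcoset_mult_bseq: "rcoset_mult bseq_ring I A B = rcoset_mult seq_ring I A B"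
  by (simp only: rcoset_mult_def coset_bseq mult_bseq)

lemma rcoset_mult_seq: "rcoset_mult seq_ring I A B = (\<Union>a\<in>A. \<Union>b\<in>B. a_r_coset seq_ring I (\<lambda>n. a n * b n))"
  by (simp add: rcoset_mult_def seq_ring_def)

lemma carrier_RF: "carrier RF = range (a_r_coset seq_ring (null_ideal cofinite))"
  by (auto simp: RF_def FactRing_def A_RCOSETS_def RCOSETS_def a_r_coset_def seq_ring_def)

lemma carrier_RU: "carrier (RU U) = range (a_r_coset seq_ring (null_ideal U))"
  by (auto simp: RU_def FactRing_def A_RCOSETS_def RCOSETS_def a_r_coset_def seq_ring_def)

lemma carrier_Ro0: "carrier Ro = (\<Union>a\<in>{x. Bseq x}. {a_r_coset bseq_ring o_ideal a})"
  unfolding Ro_def FactRing_def A_RCOSETS_def RCOSETS_def a_r_coset_def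
  by (simp add: bseq_ring_def seq_ring_def)

lemma carrier_Ro: "carrier Ro = a_r_coset seq_ring o_ideal ` {x. Bseq x}"
  unfolding carrier_Ro0 coset_bseq by blast

lemma Bseq_add2: "Bseq (a::nat\<Rightarrow>real) \<Longrightarrow> Bseq b \<Longrightarrow> Bseq (\<lambda>n. a n + b n)"
proof -
  assume "Bseq a" "Bseq b"
  then obtain K L where "\<forall>n. norm (a n) \<le> K" "\<forall>n. norm (b n) \<le> L" by (meson BseqE)
  then have "\<forall>n. norm (a n + b n) \<le> K + L"
    by (metis add_mono norm_triangle_ineq order_trans)
  then show ?thesis by (intro BseqI'[of _ "K+L"]) blast
qed

locale seqid =
  fixes H S :: "(nat \<Rightarrow> real) set"
  assumes zero: "(\<lambda>n. 0) \<in> H"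
  and add: "a \<in> H \<Longrightarrow> b \<in> H \<Longrightarrow> (\<lambda>n. a n + b n) \<in> H"
  and neg: "a \<in> H \<Longrightarrow> (\<lambda>n. - a n) \<in> H"
  and sub: "H \<subseteq> S"
  and Sadd: "a \<in> S \<Longrightarrow> b \<in> S \<Longrightarrow> (\<lambda>n. a n + b n) \<in> S"
  and mul: "a \<in> H \<Longrightarrow> c \<in> S \<Longrightarrow> (\<lambda>n. a n * c n) \<in> H"
begin

lemma self: "x \<in> a_r_coset seq_ring H x"
  using zero by (simp add: coset_seq)

lemma eq: assumes "(\<lambda>n. x n - y n) \<in> H" shows "a_r_coset seq_ring H x = a_r_coset seq_ring H y"
proof -
  have *: "(\<lambda>n. z n - x n) \<in> H \<longleftrightarrow> (\<lambda>n. z n - y n) \<in> H" for z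
  proof
    assume "(\<lambda>n. z n - x n) \<in> H"
    from add[OF this assms] have "(\<lambda>n. z n - x n + (x n - y n)) \<in> H" .
    moreover have "(\<lambda>n. z n - x n + (x n - y n)) = (\<lambda>n. z n - y n)" by auto
    ultimately show "(\<lambda>n. z n - y n) \<in> H" by simp
  next
    assume "(\<lambda>n. z n - y n) \<in> H"
    from add[OF this neg[OF assms]] have "(\<lambda>n. z n - y n + - (x n - y n)) \<in> H" .
    moreover have "(\<lambda>n. z n - y n + - (x n - y n)) = (\<lambda>n. z n - x n)" by auto
    ultimately show "(\<lambda>n. z n - x n) \<in> H" by simp
  qed
  show ?thesis unfolding coset_seq by (rule Collect_cong) (rule *)
qed

lemma addc: "set_add seq_ring (a_r_coset seq_ring H x) (a_r_coset seq_ring H y)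
   = a_r_coset seq_ring H (\<lambda>n. x n + y n)"
proof (intro equalityI subsetI)
  fix z assume "z \<in> set_add seq_ring (a_r_coset seq_ring H x) (a_r_coset seq_ring H y)"
  then obtain a b where a: "a \<in> a_r_coset seq_ring H x" and b: "b \<in> a_r_coset seq_ring H y"
    and z: "z = (\<lambda>n. a n + b n)"
    unfolding set_add_seq by blast
  from a b have "(\<lambda>n. a n - x n) \<in> H" "(\<lambda>n. b n - y n) \<in> H" by (simp_all add: coset_seq)
  from add[OF this] have "(\<lambda>n. a n - x n + (b n - y n)) \<in> H" .
  moreover have "(\<lambda>n. a n - x n + (b n - y n)) = (\<lambda>n. z n - (x n + y n))" using z by auto
  ultimately show "z \<in> a_r_coset seq_ring H (\<lambda>n. x n + y n)" by (simp add: coset_seq)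
next
  fix z assume "z \<in> a_r_coset seq_ring H (\<lambda>n. x n + y n)"
  then have "(\<lambda>n. z n - (x n + y n)) \<in> H" by (simp add: coset_seq)
  moreover have "(\<lambda>n. z n - (x n + y n)) = (\<lambda>n. (z n - y n) - x n)" by auto
  ultimately have a: "(\<lambda>n. z n - y n) \<in> a_r_coset seq_ring H x" by (simp add: coset_seq)
  have z: "z = (\<lambda>n. (z n - y n) + y n)" by auto
  show "z \<in> set_add seq_ring (a_r_coset seq_ring H x) (a_r_coset seq_ring H y)"
    unfolding set_add_seq using a self[of y] z by blast
qed

lemma multc: assumes xS: "x \<in> S" and yS: "y \<in> S"
  shows "rcoset_mult seq_ring H (a_r_coset seq_ring H x) (a_r_coset seq_ring H y)
   = a_r_coset seq_ring H (\<lambda>n. x n * y n)"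
proof -
  have key: "a_r_coset seq_ring H (\<lambda>n. a n * b n) = a_r_coset seq_ring H (\<lambda>n. x n * y n)"
    if a: "a \<in> a_r_coset seq_ring H x" and b: "b \<in> a_r_coset seq_ring H y" for a b
  proof (rule eq)
    have ha: "(\<lambda>n. a n - x n) \<in> H" and hb: "(\<lambda>n. b n - y n) \<in> H"
      using a b by (simp_all add: coset_seq)
    have "(\<lambda>n. b n - y n) \<in> S" using hb sub by blast
    from Sadd[OF this yS] have "(\<lambda>n. b n - y n + y n) \<in> S" .
    then have bS: "b \<in> S" by simp
    from add[OF mul[OF ha bS] mul[OF hb xS]]
    have "(\<lambda>n. (a n - x n) * b n + (b n - y n) * x n) \<in> H" .
    moreover have "(\<lambda>n. (a n - x n) * b n + (b n - y n) * x n) = (\<lambda>n. a n * b n - x n * y n)"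
      by (auto simp: algebra_simps)
    ultimately show "(\<lambda>n. a n * b n - x n * y n) \<in> H" by simp
  qed
  show ?thesis
  proof (intro equalityI subsetI)
    fix z assume "z \<in> rcoset_mult seq_ring H (a_r_coset seq_ring H x) (a_r_coset seq_ring H y)"
    then obtain a b where a: "a \<in> a_r_coset seq_ring H x" and b: "b \<in> a_r_coset seq_ring H y"
      and z: "z \<in> a_r_coset seq_ring H (\<lambda>n. a n * b n)"
      unfolding rcoset_mult_seq by blast
    from z key[OF a b] show "z \<in> a_r_coset seq_ring H (\<lambda>n. x n * y n)" by simp
  next
    fix z assume z: "z \<in> a_r_coset seq_ring H (\<lambda>n. x n * y n)"
    show "z \<in> rcoset_mult seq_ring H (a_r_coset seq_ring H x) (a_r_coset seq_ring H y)"
      unfolding rcoset_mult_seq using self[of x] self[of y] z by blast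
  qed
qed

end

lemma null_seqid: "seqid (null_ideal G) UNIV"
proof unfold_locales
  fix a b assume "a \<in> null_ideal G" "b \<in> null_ideal G"
  then show "(\<lambda>n. a n + b n) \<in> null_ideal G"
    unfolding null_ideal_def by (auto elim: eventually_elim2)
next
  fix a assume "a \<in> null_ideal G"
  then show "(\<lambda>n. - a n) \<in> null_ideal G"
    unfolding null_ideal_def by (auto elim: eventually_mono)
next
  fix a c assume "a \<in> null_ideal G"
  then show "(\<lambda>n. a n * c n) \<in> null_ideal G"
    unfolding null_ideal_def by (auto elim: eventually_mono)
qed (auto simp: null_ideal_def)

lemma o_seqid: "seqid o_ideal {x. Bseq x}"
proof unfold_locales
  show "(\<lambda>n. 0) \<in> o_ideal" by (simp add: o_ideal_def)
next
  fix a b assume "a \<in> o_ideal" "b \<in> o_ideal"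
  then show "(\<lambda>n. a n + b n) \<in> o_ideal"
    using Bseq_add2[of a b] tendsto_add[of "\<lambda>n. real n * a n" 0 _ "\<lambda>n. real n * b n" 0]
    by (simp add: o_ideal_def distrib_left)
next
  fix a assume "a \<in> o_ideal"
  then show "(\<lambda>n. - a n) \<in> o_ideal"
    using tendsto_minus[of "\<lambda>n. real n * a n" 0] by (simp add: o_ideal_def Bseq_minus_iff)
next
  show "o_ideal \<subseteq> {x. Bseq x}" by (auto simp: o_ideal_def)
next
  fix a b :: "nat \<Rightarrow> real" assume "a \<in> {x. Bseq x}" "b \<in> {x. Bseq x}"
  then show "(\<lambda>n. a n + b n) \<in> {x. Bseq x}" by (simp add: Bseq_add2)
next
  fix a c :: "nat \<Rightarrow> real" assume "a \<in> o_ideal" "c \<in> {x. Bseq x}"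
  then show "(\<lambda>n. a n * c n) \<in> o_ideal"
    using lim_null_mult_right_bounded[of "\<lambda>n. real n * a n" sequentially c] Bseq_mult[of a c]
    by (auto simp: o_ideal_def Bfun_def mult.assoc)
qed


interpretation nF: seqid "null_ideal cofinite" UNIV by (rule null_seqid)
interpretation nU: seqid "null_ideal U" UNIV for U by (rule null_seqid)
interpretation oo: seqid o_ideal "{x. Bseq x}" by (rule o_seqid)

lemma fin_o: assumes "eventually (\<lambda>n. x n = y n) cofinite"
  shows "(\<lambda>n. x n - y n) \<in> o_ideal"
proof -
  have ev: "eventually (\<lambda>n. x n - y n = 0) sequentially"
    using assms by (simp add: cofinite_eq_sequentially)
  have "Bseq (\<lambda>n. x n - y n)"
    by (rule Bseq_eventually_mono[of _ "\<lambda>n. 0"]) (use ev in \<open>auto elim: eventually_mono\<close>)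
  moreover have "((\<lambda>n. real n * (x n - y n)) \<longlonglongrightarrow> 0)"
    by (rule tendsto_eventually) (use ev in \<open>auto elim: eventually_mono\<close>)
  ultimately show ?thesis by (simp add: o_ideal_def)
qed

lemma memF: "y \<in> a_r_coset seq_ring (null_ideal G) x \<longleftrightarrow> eventually (\<lambda>n. y n = x n) G"
  by (simp add: coset_seq null_ideal_def)

lemma mapi: "map_i (a_r_coset seq_ring (null_ideal cofinite) x) = a_r_coset seq_ring o_ideal x"
proof -
  have "a_r_coset seq_ring o_ideal y = a_r_coset seq_ring o_ideal x"
    if "y \<in> a_r_coset seq_ring (null_ideal cofinite) x" for y
    using that by (intro oo.eq fin_o) (simp add: memF)
  then show ?thesis using nF.self[of x] unfolding map_i_def coset_bseq by blast
qed

lemma mapj: assumes "U \<le> cofinite"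
  shows "map_j U (a_r_coset seq_ring (null_ideal cofinite) x) = a_r_coset seq_ring (null_ideal U) x"
proof -
  have "a_r_coset seq_ring (null_ideal U) y = a_r_coset seq_ring (null_ideal U) x"
    if "y \<in> a_r_coset seq_ring (null_ideal cofinite) x" for y
  proof -
    from that have "eventually (\<lambda>n. y n = x n) cofinite" by (simp only: memF)
    then have "eventually (\<lambda>n. y n = x n) U" by (rule filter_leD[OF assms])
    then have "(\<lambda>n. y n - x n) \<in> null_ideal U"
      unfolding null_ideal_def by (auto elim: eventually_mono)
    then show ?thesis by (rule nU.eq)
  qed
  then show ?thesis using nF.self[of x] unfolding map_j_def by blast
qed

lemma carrier_fin_sub: "carrier RF_fin \<subseteq> carrier RF"
  by (auto simp: RF_fin_def)

lemma fin_bseq: assumes "r \<in> carrier RF_fin"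
  shows "\<exists>x. r = a_r_coset seq_ring (null_ideal cofinite) x \<and> Bseq x"
proof -
  obtain x where r: "r = a_r_coset seq_ring (null_ideal cofinite) x"
    using assms carrier_fin_sub carrier_RF by blast
  obtain m :: nat where
    l: "leF (a_r_coset seq_ring (null_ideal cofinite) (\<lambda>n. - real m)) r" and
    u: "leF r (a_r_coset seq_ring (null_ideal cofinite) (\<lambda>n. real m))"
    using assms by (auto simp: RF_fin_def)
  from l obtain a y where "a \<in> a_r_coset seq_ring (null_ideal cofinite) (\<lambda>n. - real m)"
    "y \<in> a_r_coset seq_ring (null_ideal cofinite) x" "eventually (\<lambda>n. a n \<le> y n) cofinite"
    unfolding leF_def r by blast
  then have "eventually (\<lambda>n. a n = - real m) cofinite"
    "eventually (\<lambda>n. y n = x n) cofinite" "eventually (\<lambda>n. a n \<le> y n) cofinite"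
    by (simp_all only: memF)
  then have e1: "eventually (\<lambda>n. - real m \<le> x n) cofinite"
    by eventually_elim simp
  from u obtain a y where "a \<in> a_r_coset seq_ring (null_ideal cofinite) (\<lambda>n. real m)"
    "y \<in> a_r_coset seq_ring (null_ideal cofinite) x" "eventually (\<lambda>n. y n \<le> a n) cofinite"
    unfolding leF_def r by blast
  then have "eventually (\<lambda>n. a n = real m) cofinite"
    "eventually (\<lambda>n. y n = x n) cofinite" "eventually (\<lambda>n. y n \<le> a n) cofinite"
    by (simp_all only: memF)
  then have e2: "eventually (\<lambda>n. x n \<le> real m) cofinite"
    by eventually_elim simp
  have "eventually (\<lambda>n. norm (x n) \<le> norm (real m)) sequentially"
    using e1 e2 unfolding cofinite_eq_sequentially by eventually_elim auto
  then have "Bseq x" by (rule Bseq_eventually_mono) simp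
  with r show ?thesis by (intro exI[of _ x] conjI)
qed

lemma carrier_RF_fin: "carrier RF_fin = {r \<in> carrier RF. \<exists>m::nat.
      leF (null_ideal cofinite +>\<^bsub>seq_ring\<^esub> (\<lambda>n. - real m)) r \<and>
      leF r (null_ideal cofinite +>\<^bsub>seq_ring\<^esub> (\<lambda>n. real m))}"
  unfolding RF_fin_def by simp

lemma fin_intro: assumes "Bseq x"
  shows "a_r_coset seq_ring (null_ideal cofinite) x \<in> carrier RF_fin"
proof -
  obtain K where K: "\<forall>n. norm (x n) \<le> K" using assms by (meson BseqE)
  define m where "m = nat (ceiling K)"
  have Km: "K \<le> real m" unfolding m_def by (rule real_nat_ceiling_ge)
  have "leF (a_r_coset seq_ring (null_ideal cofinite) (\<lambda>n. - real m)) (a_r_coset seq_ring (null_ideal cofinite) x)"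
  proof -
    have "\<forall>n. - real m \<le> x n"
    proof
      fix n have "\<bar>x n\<bar> \<le> K" using K by simp
      with Km show "- real m \<le> x n" by linarith
    qed
    then have "eventually (\<lambda>n. - real m \<le> x n) cofinite" by (rule always_eventually)
    then show ?thesis unfolding leF_def
      apply -
      apply (rule bexI[where x="\<lambda>n. - real m"], rule bexI[where x=x])
      by (simp_all add: nF.self)
  qed
  moreover have "leF (a_r_coset seq_ring (null_ideal cofinite) x) (a_r_coset seq_ring (null_ideal cofinite) (\<lambda>n. real m))"
  proof -
    have "\<forall>n. x n \<le> real m"
    proof
      fix n have "\<bar>x n\<bar> \<le> K" using K by simp
      with Km show "x n \<le> real m" by linarith
    qed
    then have "eventually (\<lambda>n. x n \<le> real m) cofinite" by (rule always_eventually)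
    then show ?thesis unfolding leF_def
      apply -
      apply (rule bexI[where x=x], rule bexI[where x="\<lambda>n. real m"])
      by (simp_all add: nF.self)
  qed
  ultimately have ex: "\<exists>m::nat. leF (a_r_coset seq_ring (null_ideal cofinite) (\<lambda>n. - real m)) (a_r_coset seq_ring (null_ideal cofinite) x) \<and>
     leF (a_r_coset seq_ring (null_ideal cofinite) x) (a_r_coset seq_ring (null_ideal cofinite) (\<lambda>n. real m))"
    by (intro exI conjI)
  have c: "a_r_coset seq_ring (null_ideal cofinite) x \<in> carrier RF" unfolding carrier_RF by (rule rangeI)
  show ?thesis unfolding carrier_RF_fin mem_Collect_eq using c ex by (rule conjI)
qed

lemma one_seq: "one seq_ring = (\<lambda>n. 1)" by (simp add: seq_ring_def)
lemma one_bseq: "one bseq_ring = (\<lambda>n. 1)" by (simp add: seq_ring_def bseq_ring_def)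

lemma RF_ops1:
  "mult RF = rcoset_mult seq_ring (null_ideal cofinite)"
  "add RF = set_add seq_ring"
  "one RF = a_r_coset seq_ring (null_ideal cofinite) (\<lambda>n. 1)"
  unfolding RF_def FactRing_def one_seq by simp_all

lemma RF_ops2:
  "mult RF_fin = rcoset_mult seq_ring (null_ideal cofinite)"
  "add RF_fin = set_add seq_ring"
  "one RF_fin = a_r_coset seq_ring (null_ideal cofinite) (\<lambda>n. 1)"
  unfolding RF_fin_def by (simp_all add: RF_ops1)

lemma RF_ops3:
  "mult (RU U) = rcoset_mult seq_ring (null_ideal U)"
  "add (RU U) = set_add seq_ring"
  "one (RU U) = a_r_coset seq_ring (null_ideal U) (\<lambda>n. 1)"
  unfolding RU_def FactRing_def one_seq by simp_all

lemma RF_ops4: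
  "mult Ro = rcoset_mult seq_ring o_ideal"
  "add Ro = set_add seq_ring"
  "one Ro = a_r_coset seq_ring o_ideal (\<lambda>n. 1)"
  unfolding Ro_def FactRing_def one_bseq coset_bseq
  by (simp_all add: fun_eq_iff rcoset_mult_bseq set_add_bseq)

lemmas RF_ops = RF_ops1 RF_ops2 RF_ops3 RF_ops4

theorem mainTheorem5:
  fixes U :: "nat filter"
  assumes "is_ultrafilter U" and "U \<le> cofinite"
  shows
    \<comment> \<open>well-definedness: i([x]_F) = [x]_o, j([x]_F) = [x]_U, independent of representative\<close>
    "(\<forall>r\<in>carrier RF_fin. \<forall>x\<in>r. map_i r = o_ideal +>\<^bsub>bseq_ring\<^esub> x) \<and>
     (\<forall>r\<in>carrier RF. \<forall>x\<in>r. map_j U r = null_ideal U +>\<^bsub>seq_ring\<^esub> x) \<and>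
     map_i \<in> carrier RF_fin \<rightarrow> carrier Ro \<and>
     map_j U \<in> carrier RF \<rightarrow> carrier (RU U) \<and>
     \<comment> \<open>ring homomorphisms\<close>
     map_i \<in> ring_hom RF_fin Ro \<and>
     map_j U \<in> ring_hom RF (RU U) \<and>
     \<comment> \<open>surjective\<close>
     map_i ` carrier RF_fin = carrier Ro \<and>
     map_j U ` carrier RF = carrier (RU U) \<and>
     \<comment> \<open>order preserving\<close>
     (\<forall>r\<in>carrier RF_fin. \<forall>s\<in>carrier RF_fin. leF r s \<longrightarrow> le_o (map_i r) (map_i s)) \<and>
     (\<forall>r\<in>carrier RF. \<forall>s\<in>carrier RF. leF r s \<longrightarrow> leU U (map_j U r) (map_j U s))"
proof -
  note cU = assms(2)
  have coset_same: "r = a_r_coset seq_ring (null_ideal cofinite) x"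
    if hr: "r \<in> carrier RF" and hx: "x \<in> r" for r x
  proof -
    obtain y where r: "r = a_r_coset seq_ring (null_ideal cofinite) y"
      using hr unfolding carrier_RF by (rule rangeE)
    have "(\<lambda>n. x n - y n) \<in> null_ideal cofinite" using hx unfolding r by (simp add: coset_seq)
    then have "a_r_coset seq_ring (null_ideal cofinite) x = a_r_coset seq_ring (null_ideal cofinite) y"
      by (rule nF.eq)
    then show ?thesis using r by simp
  qed
  have finE: "\<exists>x. r = a_r_coset seq_ring (null_ideal cofinite) x \<and> Bseq x" if "r \<in> carrier RF_fin" for r
    using fin_bseq[OF that] .
  have W1: "\<forall>r\<in>carrier RF_fin. \<forall>x\<in>r. map_i r = o_ideal +>\<^bsub>bseq_ring\<^esub> x"
  proof (intro ballI)
    fix r x assume h: "r \<in> carrier RF_fin" "x \<in> r"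
    have "r \<in> carrier RF" using h(1) carrier_fin_sub by (rule subsetD[rotated])
    then have "r = a_r_coset seq_ring (null_ideal cofinite) x"
      using h(2) by (rule coset_same)
    then show "map_i r = o_ideal +>\<^bsub>bseq_ring\<^esub> x" by (simp add: mapi coset_bseq)
  qed
  have W2: "\<forall>r\<in>carrier RF. \<forall>x\<in>r. map_j U r = null_ideal U +>\<^bsub>seq_ring\<^esub> x"
  proof (intro ballI)
    fix r x assume h: "r \<in> carrier RF" "x \<in> r"
    then have "r = a_r_coset seq_ring (null_ideal cofinite) x" by (rule coset_same)
    then show "map_j U r = null_ideal U +>\<^bsub>seq_ring\<^esub> x" by (simp add: mapj[OF cU])
  qed
  have F1: "map_i \<in> carrier RF_fin \<rightarrow> carrier Ro"
  proof
    fix r assume "r \<in> carrier RF_fin"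
    from finE[OF this] obtain x where "r = a_r_coset seq_ring (null_ideal cofinite) x" "Bseq x"
      by auto
    then show "map_i r \<in> carrier Ro" by (simp add: mapi carrier_Ro)
  qed
  have F2: "map_j U \<in> carrier RF \<rightarrow> carrier (RU U)"
  proof
    fix r assume hr: "r \<in> carrier RF"
    obtain x where "r = a_r_coset seq_ring (null_ideal cofinite) x"
      using hr unfolding carrier_RF by (rule rangeE)
    then show "map_j U r \<in> carrier (RU U)" by (simp add: mapj[OF cU] carrier_RU)
  qed
  have H1: "map_i \<in> ring_hom RF_fin Ro"
  proof (rule ring_hom_memI)
    fix r assume "r \<in> carrier RF_fin" then show "map_i r \<in> carrier Ro" using F1 by (rule funcset_mem[rotated])
  next
    fix r s assume r: "r \<in> carrier RF_fin" and s: "s \<in> carrier RF_fin"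
    from finE[OF r] obtain x where x: "r = a_r_coset seq_ring (null_ideal cofinite) x" "Bseq x" by auto
    from finE[OF s] obtain y where y: "s = a_r_coset seq_ring (null_ideal cofinite) y" "Bseq y" by auto
    show "map_i (r \<otimes>\<^bsub>RF_fin\<^esub> s) = map_i r \<otimes>\<^bsub>Ro\<^esub> map_i s"
      using x y by (simp add: RF_ops nF.multc mapi oo.multc)
  next
    fix r s assume r: "r \<in> carrier RF_fin" and s: "s \<in> carrier RF_fin"
    from finE[OF r] obtain x where x: "r = a_r_coset seq_ring (null_ideal cofinite) x" "Bseq x" by auto
    from finE[OF s] obtain y where y: "s = a_r_coset seq_ring (null_ideal cofinite) y" "Bseq y" by auto
    show "map_i (r \<oplus>\<^bsub>RF_fin\<^esub> s) = map_i r \<oplus>\<^bsub>Ro\<^esub> map_i s"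
      using x y by (simp add: RF_ops nF.addc mapi oo.addc)
  next
    show "map_i \<one>\<^bsub>RF_fin\<^esub> = \<one>\<^bsub>Ro\<^esub>" by (simp add: RF_ops mapi)
  qed
  have H2: "map_j U \<in> ring_hom RF (RU U)"
  proof (rule ring_hom_memI)
    fix r assume "r \<in> carrier RF" then show "map_j U r \<in> carrier (RU U)" using F2 by (rule funcset_mem[rotated])
  next
    fix r s assume r: "r \<in> carrier RF" and s: "s \<in> carrier RF"
    from r obtain x where x: "r = a_r_coset seq_ring (null_ideal cofinite) x"
      unfolding carrier_RF by (rule rangeE)
    from s obtain y where y: "s = a_r_coset seq_ring (null_ideal cofinite) y"
      unfolding carrier_RF by (rule rangeE)
    show "map_j U (r \<otimes>\<^bsub>RF\<^esub> s) = map_j U r \<otimes>\<^bsub>RU U\<^esub> map_j U s"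
      using x y by (simp add: RF_ops nF.multc mapj[OF cU] nU.multc)
  next
    fix r s assume r: "r \<in> carrier RF" and s: "s \<in> carrier RF"
    from r obtain x where x: "r = a_r_coset seq_ring (null_ideal cofinite) x"
      unfolding carrier_RF by (rule rangeE)
    from s obtain y where y: "s = a_r_coset seq_ring (null_ideal cofinite) y"
      unfolding carrier_RF by (rule rangeE)
    show "map_j U (r \<oplus>\<^bsub>RF\<^esub> s) = map_j U r \<oplus>\<^bsub>RU U\<^esub> map_j U s"
      using x y by (simp add: RF_ops nF.addc mapj[OF cU] nU.addc)
  next
    show "map_j U \<one>\<^bsub>RF\<^esub> = \<one>\<^bsub>RU U\<^esub>" by (simp add: RF_ops mapj[OF cU])
  qed
  have S1: "map_i ` carrier RF_fin = carrier Ro"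
  proof (intro equalityI subsetI)
    fix c assume "c \<in> map_i ` carrier RF_fin"
    then obtain r where "r \<in> carrier RF_fin" "c = map_i r" by (rule imageE) simp
    then show "c \<in> carrier Ro" using F1 by auto
  next
    fix c assume "c \<in> carrier Ro"
    then obtain x where x: "x \<in> {x. Bseq x}" "c = a_r_coset seq_ring o_ideal x"
      unfolding carrier_Ro by (rule imageE) simp
    then have "c = map_i (a_r_coset seq_ring (null_ideal cofinite) x)" by (simp add: mapi)
    moreover have "a_r_coset seq_ring (null_ideal cofinite) x \<in> carrier RF_fin"
      using x(1) by (intro fin_intro) simp
    ultimately show "c \<in> map_i ` carrier RF_fin" by (rule image_eqI)
  qed
  have S2: "map_j U ` carrier RF = carrier (RU U)"
  proof (intro equalityI subsetI)
    fix c assume "c \<in> map_j U ` carrier RF"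
    then obtain r where "r \<in> carrier RF" "c = map_j U r" by (rule imageE) simp
    then show "c \<in> carrier (RU U)" using F2 by auto
  next
    fix c assume "c \<in> carrier (RU U)"
    then obtain x where x: "c = a_r_coset seq_ring (null_ideal U) x"
      unfolding carrier_RU by (rule rangeE)
    then have "c = map_j U (a_r_coset seq_ring (null_ideal cofinite) x)" by (simp add: mapj[OF cU])
    moreover have "a_r_coset seq_ring (null_ideal cofinite) x \<in> carrier RF"
      unfolding carrier_RF by (rule rangeI)
    ultimately show "c \<in> map_j U ` carrier RF" by (rule image_eqI)
  qed
  have O1: "\<forall>r\<in>carrier RF_fin. \<forall>s\<in>carrier RF_fin. leF r s \<longrightarrow> le_o (map_i r) (map_i s)"
  proof (intro ballI impI)
    fix r s assume "leF r s"
    then obtain x y where xy: "x \<in> r" "y \<in> s" "eventually (\<lambda>n. x n \<le> y n) cofinite"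
      unfolding leF_def by blast
    then obtain N where N: "\<forall>n\<ge>N. x n \<le> y n"
      unfolding cofinite_eq_sequentially eventually_sequentially by blast
    have hx: "x \<in> map_i r" unfolding map_i_def coset_bseq using xy(1) oo.self[of x] by blast
    have hy: "y \<in> map_i s" unfolding map_i_def coset_bseq using xy(2) oo.self[of y] by blast
    show "le_o (map_i r) (map_i s)" unfolding le_o_def
      apply (rule bexI[where x=x], rule bexI[where x=y], rule bexI[where x="\<lambda>n. 0"])
      using N hx hy oo.zero by auto
  qed
  have O2: "\<forall>r\<in>carrier RF. \<forall>s\<in>carrier RF. leF r s \<longrightarrow> leU U (map_j U r) (map_j U s)"
  proof (intro ballI impI)
    fix r s assume "leF r s"
    then obtain x y where xy: "x \<in> r" "y \<in> s" "eventually (\<lambda>n. x n \<le> y n) cofinite"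
      unfolding leF_def by blast
    have hx: "x \<in> map_j U r" unfolding map_j_def using xy(1) nU.self[of x] by blast
    have hy: "y \<in> map_j U s" unfolding map_j_def using xy(2) nU.self[of y] by blast
    have ev: "eventually (\<lambda>n. x n \<le> y n) U" using cU xy(3) by (rule filter_leD)
    show "leU U (map_j U r) (map_j U s)" unfolding leU_def
      apply (rule bexI[where x=x], rule bexI[where x=y])
      using ev hx hy by auto
  qed
  show ?thesis using W1 W2 F1 F2 H1 H2 S1 S2 O1 O2 by (intro conjI)
qed

end
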